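(* Let $\eta>0$, $\lambda>0$ with $\eta\lambda\le \tfrac12$, let $x(0)\in\mathbb{R}^d\setminus\{0\}$, and let $(x(t))_{t\ge0}$ be the GD+WD iterates $x(t+1)=(1-\eta\lambda)x(t)-\eta\nabla L(x(t))$. Set $$T_0=\left\lceil \frac{1}{2\eta\lambda}\left(\left|\ln \frac{\|x(0)\|_2^2}{\rho\pi^2\eta}\right|+3\right)\right\rceil .$$ Then $$\min_{t=0,\ldots,T_0}\|\nabla L(\bar x(t))\|_2^2\le 8\pi^4\rho^2\lambda\eta .$$
   Context: $L:\mathbb{R}^d\setminus\{0\}\to\mathbb{R}$ is $C^2$ and scale invariant, i.e. $L(cx)=L(x)$ for all $c>0$ and $x\neq0$. $\rho:=\max_{\|x\|_2=1}\|\nabla^2L(x)\|_2$ (spectral norm), assumed $\rho>0$. For $x\ne0$, $\bar x:=x/\|x\|_2$. (For scale invariant $L$ one has $\langle\nabla L(x),x\rangle=0$, so the iterates remain nonzero when $\eta\lambda<1$.) *)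

theory Defs
  imports "HOL-Analysis.Analysis"
begin

definition hess_sphere_bound :: "('a::euclidean_space \<Rightarrow> 'a \<Rightarrow>\<^sub>L 'a) \<Rightarrow> real" where
  "hess_sphere_bound H = Sup ((\<lambda>x. norm (H x)) ` {x. norm x = 1})"

end

theory Submission
  imports Defs
begin


lemma taylor_lb:
  fixes phi psi chi :: "real \<Rightarrow> real" and T K :: real
  assumes T: "0 \<le> T"
    and d1: "\<And>s. 0 \<le> s \<Longrightarrow> s \<le> T \<Longrightarrow> (phi has_real_derivative psi s) (at s)"
    and d2: "\<And>s. 0 \<le> s \<Longrightarrow> s \<le> T \<Longrightarrow> (psi has_real_derivative chi s) (at s)"
    and b: "\<And>s. 0 \<le> s \<Longrightarrow> s \<le> T \<Longrightarrow> chi s \<ge> - K"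
  shows "phi T \<ge> phi 0 + T * psi 0 - K * T^2 / 2"
proof -
  have g: "psi s - psi 0 + K * s \<ge> 0" if s: "0 \<le> s" "s \<le> T" for s
  proof -
    have "(\<lambda>r. psi r - psi 0 + K * r) 0 \<le> (\<lambda>r. psi r - psi 0 + K * r) s"
    proof (rule DERIV_nonneg_imp_nondecreasing[OF s(1)])
      fix x assume x: "0 \<le> x" "x \<le> s"
      show "\<exists>y. ((\<lambda>r. psi r - psi 0 + K * r) has_real_derivative y) (at x) \<and> 0 \<le> y"
        apply (rule exI[of _ "chi x + K"])
        using d2[of x] b[of x] x s
        by (auto intro!: derivative_eq_intros)
    qed
    then show ?thesis by simp
  qed
  have "(\<lambda>r. phi r - r * psi 0 + K * r^2 / 2) 0 \<le> (\<lambda>r. phi r - r * psi 0 + K * r^2 / 2) T"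
  proof (rule DERIV_nonneg_imp_nondecreasing[OF T])
    fix x assume x: "0 \<le> x" "x \<le> T"
    show "\<exists>y. ((\<lambda>r. phi r - r * psi 0 + K * r^2 / 2) has_real_derivative y) (at x) \<and> 0 \<le> y"
      apply (rule exI[of _ "psi x - psi 0 + K * x"])
      using d1[of x] g[of x] x
      by (auto intro!: derivative_eq_intros)
  qed
  then show ?thesis by simp
qed



lemma nat_ceil_bounds:
  fixes x :: real assumes "0 \<le> x"
  shows "x \<le> real (nat \<lceil>x\<rceil>)" "real (nat \<lceil>x\<rceil>) < x + 1"
proof -
  have "real (nat \<lceil>x\<rceil>) = of_int \<lceil>x\<rceil>" using assms by simp
  then show "x \<le> real (nat \<lceil>x\<rceil>)" "real (nat \<lceil>x\<rceil>) < x + 1"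
    by (simp_all add: le_of_int_ceiling) linarith
qed

lemma discrete_contra:
  fixes a s La :: "nat \<Rightarrow> real" and e :: real and T0 :: nat
  assumes e: "0 < e" "e \<le> 1/2"
    and a_pos: "\<And>t. a t > 0"
    and a_step: "\<And>t. a (Suc t) = (1-e)^2 * a t + s t / a t"
    and s_bd: "\<And>t. s t \<le> pi^2"
    and desc: "\<And>t. 4 \<le> a t \<Longrightarrow> La (Suc t) \<le> La t - 3/4 * (s t / a t)"
    and range: "\<And>i j. La i - La j \<le> 4*pi"
    and s_low: "\<And>t. t \<le> T0 \<Longrightarrow> s t > 8*pi^4*e"
    and T0: "real T0 \<ge> (\<bar>ln (a 0 / pi^2)\<bar> + 3)/(2*e)"
  shows False
proof -
  define q where "q = (1-e)^2"
  define S where "S = 8*pi^4*e"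
  define \<delta> where "\<delta> = (2*pi^4-8)*e"
  define l where "l = ln (a 0 / pi^2)"
  have pi3: "pi > 3" by (rule pi_gt3)
  have pi4: "pi < 3.15" using pi_approx(2) by simp
  have pi2: "pi^2 > 9" using pi3 power_strict_mono[of 3 pi 2] by simp
  have pi4b: "pi^4 > 81" using pi3 power_strict_mono[of 3 pi 4] by simp
  have S_pos: "S > 0" using e by (simp add: S_def)
  have "S < pi^2" using s_low[of 0] s_bd[of 0] unfolding S_def by linarith
  then have "pi^2 * (e * (8*pi^2)) < pi^2 * 1"
    unfolding S_def by (simp add: power4_eq_xxxx power2_eq_square algebra_simps)
  then have e_small: "e * (8*pi^2) < 1" using pi2 by (simp only: mult_less_cancel_left_pos)
  have "e * 72 \<le> e * (8*pi^2)" using pi2 e by simp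
  then have e_small': "e < 1/72" using e_small by linarith
  have q1: "q \<le> 1" "q \<ge> 1 - 2*e" "q > 0"
  proof -
    have "1 - e > 0" "1 - e \<le> 1" using e by auto
    then show "q \<le> 1" "q > 0" unfolding q_def by (auto simp: power_le_one)
    show "q \<ge> 1 - 2*e" unfolding q_def by (simp add: power2_eq_square algebra_simps)
  qed
  have step_low: "a (Suc t) \<ge> q * a t + S / a t" if "t \<le> T0" for t
  proof -
    have "S / a t \<le> s t / a t" using s_low[OF that] a_pos[of t] unfolding S_def
      by (simp add: divide_right_mono)
    then show ?thesis using a_step[of t] unfolding q_def by linarith
  qed
  have stay4: "a (Suc t) \<ge> 4" if "a t \<ge> 4" "t \<le> T0" for t
  proof (cases "q * a t \<ge> 4")
    case True
    moreover have "S / a t > 0" using S_pos a_pos[of t] by simp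
    ultimately show ?thesis using step_low[OF that(2)] by linarith
  next
    case False
    have at: "a t \<le> 4 / q" using False q1 by (simp add: field_simps)
    have "S / a t \<ge> S / (4/q)" using at a_pos[of t] S_pos q1(3)
      by (intro divide_left_mono) auto
    then have "S / a t \<ge> S * q / 4" by simp
    moreover have "q * a t \<ge> 4 * q" using that(1) q1 by simp
    moreover have "4 * q + S * q / 4 \<ge> 4"
    proof -
      have "16*pi^4*e \<le> 16*pi^4*(1/72)" using e_small' by simp
      then have "8*pi^4 - 32 - 16*pi^4*e \<ge> 0" using pi4b by linarith
      then have "e * (8*pi^4 - 32 - 16*pi^4*e) \<ge> 0" using e by simp
      then have "(1-2*e) * (16 + S) \<ge> 16" unfolding S_def by (simp add: algebra_simps)
      then have "q * (16 + S) \<ge> 16" using q1 S_pos by (smt (verit) mult_right_mono)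
      then show ?thesis by (simp add: algebra_simps)
    qed
    ultimately show ?thesis using step_low[OF that(2)] by linarith
  qed
  have grow: "a (Suc t) \<ge> a t + \<delta>" if "a t < 4" "t \<le> T0" for t
  proof -
    have h1: "S / a t \<ge> S / 4" using that(1) a_pos[of t] S_pos
      by (intro divide_left_mono) auto
    have "q * a t \<ge> (1 - 2*e) * a t" using q1 a_pos[of t] by (simp add: mult_right_mono)
    moreover have "2*e * a t \<le> 2*e*4" using that(1) e by simp
    ultimately have "q * a t \<ge> a t - 8*e" by (simp add: algebra_simps)
    with h1 show ?thesis using step_low[OF that(2)] unfolding \<delta>_def S_def by (simp add: algebra_simps)
  qed
  have \<delta>_pos: "\<delta> > 0" using pi4b e by (simp add: \<delta>_def)
  define K where "K = nat \<lceil>4/\<delta>\<rceil>"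
  have K: "4/\<delta> \<le> real K" "real K < 4/\<delta> + 1" unfolding K_def using nat_ceil_bounds[of "4/\<delta>"] \<delta>_pos by auto
  have T0_big: "real T0 \<ge> 3/(2*e)"
  proof -
    have "3/(2*e) \<le> (\<bar>ln (a 0 / pi^2)\<bar> + 3)/(2*e)" using e by (intro divide_right_mono) auto
    then show ?thesis using T0 by linarith
  qed
  have "4 \<le> (3/100) * (2*pi^4-8)" using pi4b by simp
  then have Kd: "4/\<delta> \<le> (3/100) / e" unfolding \<delta>_def using e pi4b by (simp add: field_simps) 
  have "(3/100) / e + 1 \<le> 3/(2*e)" using e by (simp add: field_simps)
  then have K_T0: "K \<le> T0" using K Kd T0_big by linarith
  have growN: "a n \<ge> a 0 + real n * \<delta>" if "\<forall>j<n. a j < 4" "n \<le> T0 + 1" for n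
    using that
  proof (induction n)
    case 0 then show ?case by simp
  next
    case (Suc n)
    have "a (Suc n) \<ge> a n + \<delta>" using grow[of n] Suc.prems by auto
    moreover have "a n \<ge> a 0 + real n * \<delta>" using Suc by auto
    ultimately show ?case by (simp add: algebra_simps)
  qed
  have exK: "\<exists>t. 4 \<le> a t \<and> t \<le> K"
  proof (rule ccontr)
    assume "\<not> ?thesis"
    then have all: "\<forall>j\<le>K. a j < 4" by (meson not_le)
    then have "a K \<ge> a 0 + real K * \<delta>" using growN[of K] K_T0 by auto
    moreover have "real K * \<delta> \<ge> 4" using K(1) \<delta>_pos by (simp add: field_simps)
    ultimately show False using all a_pos[of 0] by auto
  qed
  define tp where "tp = (LEAST t. 4 \<le> a t)"
  have tp: "4 \<le> a tp" "tp \<le> K" "\<And>j. j < tp \<Longrightarrow> a j < 4"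
  proof -
    obtain t where t: "4 \<le> a t" "t \<le> K" using exK by auto
    show "4 \<le> a tp" unfolding tp_def using t(1) by (rule LeastI)
    show "tp \<le> K" unfolding tp_def using t Least_le[of "\<lambda>t. 4 \<le> a t" t] by linarith
    show "\<And>j. j < tp \<Longrightarrow> a j < 4" unfolding tp_def using not_less_Least by fastforce
  qed
  have stay: "4 \<le> a (tp + n)" if "tp + n \<le> T0 + 1" for n
    using that
  proof (induction n)
    case 0 then show ?case using tp by simp
  next
    case (Suc n)
    then show ?case using stay4[of "tp+n"] by simp
  qed
  have decay: "a (tp+n) \<le> q^n * a tp + 4/3*(La tp - La (tp+n)) \<and> La (tp+n) \<le> La tp"
    if "tp + n \<le> T0" for n
    using that
  proof (induction n)
    case 0 then show ?case by simp
  next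
    case (Suc n)
    define t where "t = tp + n"
    have IH: "a t \<le> q^n * a tp + 4/3*(La tp - La t)" "La t \<le> La tp"
      using Suc unfolding t_def by auto
    have a4: "4 \<le> a t" using stay[of n] Suc.prems unfolding t_def by simp
    have "s t > S" using s_low[of t] Suc.prems unfolding t_def S_def by simp
    then have "s t > 0" using S_pos by linarith
    then have st: "s t / a t \<ge> 0" using a_pos[of t] by simp
    have d: "La (Suc t) \<le> La t - 3/4 * (s t / a t)" using desc[OF a4] .
    have A: "q * (4/3*(La tp - La t)) \<le> 4/3*(La tp - La t)"
      using IH(2) q1 by (simp add: mult_left_le_one_le)
    have aux: "Y + X \<le> Q + 4/3*(La tp - La (Suc t))" if "A \<le> 4/3*(La tp - La t)" "Y \<le> Q + A"
        "La (Suc t) \<le> La t - 3/4 * X" for A X Q Y using that by (simp add: field_simps)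
    have B: "q * a t \<le> q^(Suc n) * a tp + q * (4/3*(La tp - La t))"
      using mult_left_mono[OF IH(1), of q] q1(3) by (simp add: distrib_left)
    have "a (Suc t) = q * a t + s t / a t" using a_step[of t] unfolding q_def by simp
    then have "a (Suc t) \<le> q^(Suc n) * a tp + 4/3*(La tp - La (Suc t))"
      using aux[OF A B d] by simp
    moreover have "La (Suc t) \<le> La tp" using d st IH(2) by linarith
    ultimately show ?case unfolding t_def by simp
  qed
  have "9 * pi^2 \<le> pi^2 * pi^2" using pi2 by (intro mult_right_mono) auto
  then have pi2_le: "16 + pi^2 \<le> pi^2 * pi^2" using pi2 by linarith
  have at_bd: "a tp * exp (-\<bar>l\<bar>) \<le> pi^2"
  proof (cases "tp = 0")
    case True
    have "exp (-\<bar>l\<bar>) \<le> exp (-l)" by simp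
    also have "exp (-l) = pi^2 / a 0" unfolding l_def using a_pos[of 0]
      by (simp add: exp_minus exp_ln)
    finally show ?thesis using True a_pos[of 0] by (simp add: field_simps)
  next
    case False
    then obtain k where k: "tp = Suc k" by (cases tp) auto
    have ak: "a k < 4" using tp(3)[of k] k by simp
    have "\<forall>j<k. a j < 4" using tp(3) k by simp
    moreover have "k \<le> T0 + 1" using k K_T0 tp(2) by simp
    ultimately have "a k \<ge> a 0 + real k * \<delta>" using growN by blast
    moreover have "real k * \<delta> \<ge> 0" using \<delta>_pos by simp
    ultimately have a0k: "a 0 \<le> a k" by linarith
    have a04: "a 0 < 4" using a0k ak by linarith
    have "a 0 / pi^2 < 1" using a04 pi2 a_pos[of 0] by simp
    then have "l < 0" unfolding l_def using a_pos[of 0] by simp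
    then have "exp (-\<bar>l\<bar>) = a 0 / pi^2" unfolding l_def using a_pos[of 0] by simp
    moreover have "a tp \<le> 4 + pi^2 / a 0"
    proof -
      have "a tp = q * a k + s k / a k" using a_step[of k] k unfolding q_def by simp
      moreover have "q * a k \<le> 1 * a k" using q1 a_pos[of k] by (intro mult_right_mono) auto
      moreover have "s k / a k \<le> pi^2 / a k" using s_bd[of k] a_pos[of k] by (simp add: divide_right_mono)
      moreover have "pi^2 / a k \<le> pi^2 / a 0" using a0k a_pos[of 0] by (simp add: frac_le)
      ultimately show ?thesis using ak by linarith
    qed
    ultimately have "a tp * exp (-\<bar>l\<bar>) \<le> (4 + pi^2 / a 0) * (a 0 / pi^2)"
      using a_pos[of 0] mult_right_mono[of "a tp" "4 + pi^2 / a 0" "a 0 / pi^2"] by simp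
    also have "\<dots> = (4 * a 0 + pi^2) / pi^2" using a_pos[of 0] pi2 by (simp add: field_simps)
    also have "\<dots> \<le> pi^2" using a04 pi2_le pi2 by (simp add: field_simps)
    finally show ?thesis .
  qed
  have q_exp: "q \<le> exp (-2*e)"
  proof -
    have "1 - e \<le> exp (-e)" using exp_ge_add_one_self[of "-e"] by simp
    then have "(1-e)^2 \<le> (exp (-e))^2" using e by (intro power_mono) auto
    also have "(exp (-e))^2 = exp (-2*e)" by (simp add: power2_eq_square exp_add[symmetric])
    finally show ?thesis unfolding q_def .
  qed
  define n1 where "n1 = nat \<lceil>\<bar>l\<bar>/(2*e)\<rceil>"
  have n1: "\<bar>l\<bar>/(2*e) \<le> real n1" "real n1 < \<bar>l\<bar>/(2*e) + 1"
    unfolding n1_def using nat_ceil_bounds[of "\<bar>l\<bar>/(2*e)"] e by auto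
  have qn1: "q^n \<le> exp (-\<bar>l\<bar>)" if "n1 \<le> n" for n
  proof -
    have "q^n \<le> q^n1" using q1 by (intro power_decreasing[OF that]) auto
    also have "\<dots> \<le> (exp (-2*e))^n1" using q1 q_exp by (intro power_mono) auto
    also have "\<dots> = exp (real n1 * (-2*e))" by (rule exp_of_nat_mult[symmetric])
    also have "\<dots> \<le> exp (-\<bar>l\<bar>)"
    proof -
      have "\<bar>l\<bar> \<le> real n1 * (2*e)" using n1(1) e by (simp add: field_simps)
      then show ?thesis by simp
    qed
    finally show ?thesis .
  qed
  define U where "U = pi^2 + 16*pi/3"
  have U_pos: "U > 0" unfolding U_def using pi3 pi2 by (simp add: add_pos_pos)
  have upper: "a (tp + n) \<le> U" if "n1 \<le> n" "tp + n \<le> T0" for n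
  proof -
    have "a (tp+n) \<le> q^n * a tp + 4/3*(La tp - La (tp+n))" using decay[OF that(2)] by simp
    moreover have "q^n * a tp \<le> exp (-\<bar>l\<bar>) * a tp"
      using qn1[OF that(1)] tp(1) by (intro mult_right_mono) auto
    moreover have "4/3*(La tp - La (tp+n)) \<le> 16*pi/3" using range[of tp "tp+n"] by simp
    moreover have "exp (-\<bar>l\<bar>) * a tp \<le> pi^2" using at_bd by (simp add: mult.commute)
    ultimately show ?thesis unfolding U_def by linarith
  qed
  define t1 where "t1 = tp + n1"
  have t1_le: "real t1 + 3/(2*e) - (3/100)/e - 2 \<le> real T0"
  proof -
    have "real tp \<le> real K" using tp(2) by simp
    then have "real t1 < (3/100)/e + 1 + (\<bar>l\<bar>/(2*e) + 1)" unfolding t1_def using K Kd n1 by simp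
    moreover have "(\<bar>l\<bar> + 3)/(2*e) = \<bar>l\<bar>/(2*e) + 3/(2*e)" by (simp add: add_divide_distrib)
    ultimately show ?thesis using T0 unfolding l_def by linarith
  qed
  have "(3/100)/e + 2 \<le> 3/(2*e)" using e by (simp add: field_simps)
  then have t1_T0: "t1 \<le> T0" using t1_le by linarith
  have window: "La t1 - La (t1 + m) \<ge> real m * (3/4 * (S / U))" if "t1 + m \<le> T0" for m
    using that
  proof (induction m)
    case 0 then show ?case by simp
  next
    case (Suc m)
    define t where "t = t1 + m"
    have a4: "4 \<le> a t" using stay[of "n1 + m"] Suc.prems unfolding t_def t1_def by (simp add: add.assoc)
    have aU: "a t \<le> U" using upper[of "n1 + m"] Suc.prems unfolding t_def t1_def by (simp add: add.assoc)
    have sS: "s t > S" using s_low[of t] Suc.prems unfolding t_def S_def by simp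
    have "S / U \<le> S / a t" using aU a_pos[of t] S_pos by (intro divide_left_mono) auto
    also have "\<dots> \<le> s t / a t" using sS a_pos[of t] by (intro divide_right_mono) auto
    finally have "S / U \<le> s t / a t" .
    moreover have "La (Suc t) \<le> La t - 3/4 * (s t / a t)" using desc[OF a4] .
    moreover have "La t1 - La t \<ge> real m * (3/4 * (S / U))" using Suc unfolding t_def by simp
    moreover have "real (Suc m) * (3/4 * (S / U)) = real m * (3/4 * (S / U)) + 3/4 * (S / U)"
      by (simp only: of_nat_Suc distrib_right mult_1_left add.commute)
    ultimately show ?case unfolding t_def add_Suc_right by linarith
  qed
  define M where "M = T0 - t1"
  have "La t1 - La T0 \<ge> real M * (3/4 * (S / U))" using window[of M] t1_T0 unfolding M_def by simp
  then have M1: "real M * (3/4 * (S / U)) \<le> 4*pi" using range[of t1 T0] by linarith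
  have "real M = real T0 - real t1" unfolding M_def using t1_T0 by simp
  then have "real M \<ge> 3/(2*e) - (3/100)/e - 2" using t1_le by linarith
  then have "real M * e \<ge> (3/(2*e) - (3/100)/e - 2) * e" using e by (intro mult_right_mono) auto
  also have "(3/(2*e) - (3/100)/e - 2) * e = 147/100 - 2*e" using e by (simp add: field_simps)
  finally have Me: "real M * e \<ge> 144/100" using e_small' by linarith
  have "real M * (3/4 * (S / U)) = (real M * e) * (6 * pi^4) / U" unfolding S_def by (simp add: field_simps)
  also have "\<dots> \<ge> (144/100) * (6*pi^4) / U" using Me U_pos by (intro divide_right_mono mult_right_mono) auto
  finally have "(144/100) * (6*pi^4) / U \<le> 4 * pi" using M1 by linarith
  then have "(144/100) * (6*pi^4) \<le> 4 * pi * U" using U_pos by (simp add: field_simps)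
  moreover have "4 * pi * U = 4 * (pi * pi^2) + 64 * pi^2 / 3" unfolding U_def by (simp add: algebra_simps power2_eq_square)
  moreover have "pi^4 = pi^2 * pi^2" by (simp add: power4_eq_xxxx power2_eq_square)
  moreover have "pi * pi^2 \<le> (315/100) * pi^2" using pi4 pi2 by (intro mult_right_mono) auto
  moreover have "9 * pi^2 \<le> pi^2 * pi^2" using pi2 by (intro mult_right_mono) auto
  ultimately show False using pi2 by linarith
qed


locale sinv =
  fixes L :: "'a::euclidean_space \<Rightarrow> real"
    and G :: "'a \<Rightarrow> 'a"
    and H :: "'a \<Rightarrow> 'a \<Rightarrow>\<^sub>L 'a"
  assumes L_grad: "\<And>y. y \<noteq> 0 \<Longrightarrow> (L has_derivative (\<lambda>h. G y \<bullet> h)) (at y)"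
    and G_hess: "\<And>y. y \<noteq> 0 \<Longrightarrow> (G has_derivative blinfun_apply (H y)) (at y)"
    and H_cont: "continuous_on (- {0}) H"
    and scale_inv: "\<And>c y. c > 0 \<Longrightarrow> y \<noteq> 0 \<Longrightarrow> L (c *\<^sub>R y) = L y"
    and rho_pos: "hess_sphere_bound H > 0"
begin

lemma L_curve:
  assumes "(g has_vector_derivative v) (at s)" "g s \<noteq> 0"
  shows "((\<lambda>s. L (g s)) has_real_derivative (G (g s) \<bullet> v)) (at s)"
proof -
  have "((\<lambda>s. L (g s)) has_derivative (\<lambda>h. G (g s) \<bullet> (h *\<^sub>R v))) (at s)"
    using has_derivative_compose[OF assms(1)[unfolded has_vector_derivative_def] L_grad[OF assms(2)]] .
  then show ?thesis
    by (rule has_derivative_imp_has_field_derivative) (simp add: mult.commute)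
qed

lemma G_curve:
  assumes "(g has_vector_derivative v) (at s)" "(b has_vector_derivative w) (at s)" "g s \<noteq> 0"
  shows "((\<lambda>s. G (g s) \<bullet> b s) has_real_derivative (G (g s) \<bullet> w + (H (g s) v) \<bullet> b s)) (at s)"
proof -
  have g1: "((\<lambda>s. G (g s)) has_derivative (\<lambda>h. H (g s) (h *\<^sub>R v))) (at s)"
    using has_derivative_compose[OF assms(1)[unfolded has_vector_derivative_def] G_hess[OF assms(3)]] .
  have "((\<lambda>s. G (g s) \<bullet> b s) has_derivative
        (\<lambda>h. G (g s) \<bullet> (h *\<^sub>R w) + H (g s) (h *\<^sub>R v) \<bullet> b s)) (at s)"
    using has_derivative_inner[OF g1 assms(2)[unfolded has_vector_derivative_def]] .
  then show ?thesis
    by (rule has_derivative_imp_has_field_derivative)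
       (simp add: blinfun.scaleR_right algebra_simps)
qed

lemma G_orth:
  assumes "y \<noteq> 0" shows "G y \<bullet> y = 0"
proof -
  have d1: "((\<lambda>r. L (r *\<^sub>R y)) has_real_derivative (G (1 *\<^sub>R y) \<bullet> y)) (at 1)"
    by (rule L_curve) (auto intro!: derivative_eq_intros simp: assms)
  have d2: "((\<lambda>r. L (r *\<^sub>R y)) has_real_derivative 0) (at 1)"
  proof (rule has_field_derivative_transform_within_open[of "\<lambda>r. L y" _ _ "{0<..}"])
    show "((\<lambda>r. L y) has_real_derivative 0) (at 1)" by simp
  qed (auto simp: scale_inv assms)
  show ?thesis using DERIV_unique[OF d1 d2] by simp
qed

lemma G_scale:
  assumes c: "c > 0" and y: "y \<noteq> 0"
  shows "G (c *\<^sub>R y) = (1/c) *\<^sub>R G y"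
proof -
  have cy: "c *\<^sub>R y \<noteq> 0" using c y by simp
  have d1: "((\<lambda>z. L (c *\<^sub>R z)) has_derivative (\<lambda>h. G (c *\<^sub>R y) \<bullet> (c *\<^sub>R h))) (at y)"
  proof -
    have "((\<lambda>z. c *\<^sub>R z) has_derivative (\<lambda>h. c *\<^sub>R h)) (at y)"
      by (rule bounded_linear_imp_has_derivative) (simp add: bounded_linear_scaleR_right)
    from has_derivative_compose[OF this L_grad[OF cy]] show ?thesis .
  qed
  have d2: "((\<lambda>z. L (c *\<^sub>R z)) has_derivative (\<lambda>h. G y \<bullet> h)) (at y)"
    by (rule has_derivative_transform_within_open[OF L_grad[OF y], of "-{0}"])
       (auto simp: scale_inv c y)
  have eq: "\<And>h. G (c *\<^sub>R y) \<bullet> (c *\<^sub>R h) = G y \<bullet> h"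
    using has_derivative_unique[OF d1 d2] by metis
  have "\<And>h. (c *\<^sub>R G (c *\<^sub>R y) - G y) \<bullet> h = 0"
    using eq by (simp add: inner_diff_left)
  then have "c *\<^sub>R G (c *\<^sub>R y) - G y = 0" by (metis inner_eq_zero_iff)
  then have "G y = c *\<^sub>R G (c *\<^sub>R y)" by simp
  then show ?thesis using c by simp
qed

lemma H_scale:
  assumes c: "c > 0" and y: "y \<noteq> 0"
  shows "H (c *\<^sub>R y) = (1/c^2) *\<^sub>R H y"
proof -
  have cy: "c *\<^sub>R y \<noteq> 0" using c y by simp
  have d1: "((\<lambda>z. G (c *\<^sub>R z)) has_derivative (\<lambda>h. H (c *\<^sub>R y) (c *\<^sub>R h))) (at y)"
  proof -
    have "((\<lambda>z. c *\<^sub>R z) has_derivative (\<lambda>h. c *\<^sub>R h)) (at y)"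
      by (rule bounded_linear_imp_has_derivative) (simp add: bounded_linear_scaleR_right)
    from has_derivative_compose[OF this G_hess[OF cy]] show ?thesis .
  qed
  have d0: "((\<lambda>z. (1/c) *\<^sub>R G z) has_derivative (\<lambda>h. (1/c) *\<^sub>R H y h)) (at y)"
    using G_hess[OF y] by (auto intro!: derivative_eq_intros)
  have d2: "((\<lambda>z. G (c *\<^sub>R z)) has_derivative (\<lambda>h. (1/c) *\<^sub>R H y h)) (at y)"
    by (rule has_derivative_transform_within_open[OF d0, of "-{0}"]) (auto simp: G_scale c y)
  have eq: "\<And>h. H (c *\<^sub>R y) (c *\<^sub>R h) = (1/c) *\<^sub>R H y h"
    using has_derivative_unique[OF d1 d2] by metis
  show ?thesis
  proof (rule blinfun_eqI)
    fix h
    have "H (c *\<^sub>R y) h = (1/c) *\<^sub>R (c *\<^sub>R H (c *\<^sub>R y) h)" using c by simp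
    also have "\<dots> = (1/c) *\<^sub>R ((1/c) *\<^sub>R H y h)" using eq[of h] by (simp add: blinfun.scaleR_right)
    also have "\<dots> = ((1/c^2) *\<^sub>R H y) h" by (simp add: power2_eq_square scaleR_blinfun.rep_eq)
    finally show "H (c *\<^sub>R y) h = ((1/c^2) *\<^sub>R H y) h" .
  qed
qed

lemma H_unit:
  assumes "norm u = 1" shows "norm (H u) \<le> hess_sphere_bound H"
proof -
  have sph: "{x::'a. norm x = 1} = sphere 0 1" by auto
  have "continuous_on (sphere 0 1) (\<lambda>x::'a. norm (H x))"
    by (rule continuous_on_norm, rule continuous_on_subset[OF H_cont]) auto
  then have "compact ((\<lambda>x. norm (H x)) ` sphere 0 1)"
    by (rule compact_continuous_image) simp
  then have bdd: "bdd_above ((\<lambda>x. norm (H x)) ` sphere 0 1)"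
    by (intro bounded_imp_bdd_above compact_imp_bounded)
  show ?thesis unfolding hess_sphere_bound_def sph
    by (rule cSup_upper[OF _ bdd]) (use assms in auto)
qed

lemma H_bound:
  assumes z: "z \<noteq> 0" shows "norm (H z) \<le> hess_sphere_bound H / (norm z)^2"
proof -
  define u where "u = (1/norm z) *\<^sub>R z"
  have u: "norm u = 1" "u \<noteq> 0" using z unfolding u_def by auto
  have "z = norm z *\<^sub>R u" using z unfolding u_def by simp
  then have "H z = (1/(norm z)^2) *\<^sub>R H u" using H_scale[of "norm z" u] z u by simp
  then have "norm (H z) = norm (H u) / (norm z)^2" by simp
  also have "\<dots> \<le> hess_sphere_bound H / (norm z)^2" using H_unit[OF u(1)] by (simp add: divide_right_mono)
  finally show ?thesis .
qed

lemma G_normalize: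
  assumes z: "z \<noteq> 0" shows "G z = (1/norm z) *\<^sub>R G ((1/norm z) *\<^sub>R z)"
proof -
  have "z = norm z *\<^sub>R ((1/norm z) *\<^sub>R z)" using z by simp
  then have "G z = G (norm z *\<^sub>R ((1/norm z) *\<^sub>R z))" by simp
  also have "\<dots> = (1/norm z) *\<^sub>R G ((1/norm z) *\<^sub>R z)" using z by (intro G_scale) auto
  finally show ?thesis .
qed

lemma circle_deriv:
  fixes u e :: 'a
  shows "((\<lambda>t. cos t *\<^sub>R u + sin t *\<^sub>R e) has_vector_derivative (- sin t *\<^sub>R u + cos t *\<^sub>R e)) (at t)"
    and "((\<lambda>t. - sin t *\<^sub>R u + cos t *\<^sub>R e) has_vector_derivative - (cos t *\<^sub>R u + sin t *\<^sub>R e)) (at t)"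
  by (auto intro!: derivative_eq_intros simp: algebra_simps)

lemma circle_norm:
  fixes u e :: 'a
  assumes "norm u = 1" "norm e = 1" "u \<bullet> e = 0"
  shows "norm (cos t *\<^sub>R u + sin t *\<^sub>R e) = 1" "norm (- sin t *\<^sub>R u + cos t *\<^sub>R e) = 1"
proof -
  have uu: "u \<bullet> u = 1" "e \<bullet> e = 1" "e \<bullet> u = 0" using assms by (auto simp: inner_commute dot_square_norm)
  have "(cos t *\<^sub>R u + sin t *\<^sub>R e) \<bullet> (cos t *\<^sub>R u + sin t *\<^sub>R e) = 1"
    using uu assms(3) by (simp add: inner_add_left inner_add_right power2_eq_square[symmetric])
  then show "norm (cos t *\<^sub>R u + sin t *\<^sub>R e) = 1" by (simp add: norm_eq_sqrt_inner)
  have "(- sin t *\<^sub>R u + cos t *\<^sub>R e) \<bullet> (- sin t *\<^sub>R u + cos t *\<^sub>R e) = 1"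
    using uu assms(3) by (simp add: inner_add_left inner_add_right inner_diff_left inner_diff_right power2_eq_square[symmetric])
  then show "norm (- sin t *\<^sub>R u + cos t *\<^sub>R e) = 1" by (simp add: norm_eq_sqrt_inner)
qed

lemma hess_quad:
  assumes "z \<noteq> 0"
  shows "\<bar>(H z v) \<bullet> v\<bar> \<le> hess_sphere_bound H / (norm z)^2 * (norm v)^2"
proof -
  have "\<bar>(H z v) \<bullet> v\<bar> \<le> norm (H z v) * norm v" by (rule Cauchy_Schwarz_ineq2)
  also have "\<dots> \<le> (norm (H z) * norm v) * norm v" by (intro mult_right_mono norm_blinfun) auto
  also have "\<dots> \<le> (hess_sphere_bound H / (norm z)^2 * norm v) * norm v"
    by (intro mult_right_mono H_bound assms) auto
  finally show ?thesis by (simp add: power2_eq_square)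
qed

lemma G_unit_bound:
  assumes u: "norm u = 1" shows "norm (G u) \<le> pi * hess_sphere_bound H"
proof (cases "G u = 0")
  case True then show ?thesis using rho_pos by simp
next
  case False
  define e where "e = (1/norm (G u)) *\<^sub>R G u"
  have u0: "u \<noteq> 0" using u by auto
  have e1: "norm e = 1" using False unfolding e_def by simp
  have ue: "u \<bullet> e = 0" unfolding e_def using G_orth[OF u0] by (simp add: inner_commute)
  define c where "c = (\<lambda>t. cos t *\<^sub>R u + sin t *\<^sub>R e)"
  define c' where "c' = (\<lambda>t. - sin t *\<^sub>R u + cos t *\<^sub>R e)"
  have cn: "norm (c t) = 1" "norm (c' t) = 1" for t
    unfolding c_def c'_def using circle_norm[OF u e1 ue] by auto
  have c0: "c t \<noteq> 0" for t using cn(1)[of t] by auto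
  have dc: "(c has_vector_derivative c' t) (at t)" for t unfolding c_def c'_def by (rule circle_deriv(1))
  have dc': "(c' has_vector_derivative - c t) (at t)" for t unfolding c_def c'_def by (rule circle_deriv(2))
  have "(\<lambda>t. L (c t)) (2*pi) \<ge> (\<lambda>t. L (c t)) 0 + (2*pi) * (G (c 0) \<bullet> c' 0) - hess_sphere_bound H * (2*pi)^2/2"
  proof (rule taylor_lb[where chi = "\<lambda>t. G (c t) \<bullet> (- c t) + (H (c t) (c' t)) \<bullet> c' t"])
    show "0 \<le> 2*pi" by simp
    fix s
    show "((\<lambda>t. L (c t)) has_real_derivative G (c s) \<bullet> c' s) (at s)"
      by (rule L_curve[OF dc c0])
    show "((\<lambda>t. G (c t) \<bullet> c' t) has_real_derivative G (c s) \<bullet> (- c s) + (H (c s) (c' s)) \<bullet> c' s) (at s)"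
      by (rule G_curve[OF dc dc' c0])
    have "\<bar>(H (c s) (c' s)) \<bullet> c' s\<bar> \<le> hess_sphere_bound H / (norm (c s))^2 * (norm (c' s))^2"
      by (rule hess_quad[OF c0])
    then have "\<bar>(H (c s) (c' s)) \<bullet> c' s\<bar> \<le> hess_sphere_bound H" using cn by simp
    moreover have "G (c s) \<bullet> (- c s) = 0" using G_orth[OF c0] by simp
    ultimately show "- hess_sphere_bound H \<le> G (c s) \<bullet> (- c s) + (H (c s) (c' s)) \<bullet> c' s" by linarith
  qed
  moreover have "c (2*pi) = u" "c 0 = u" "c' 0 = e" unfolding c_def c'_def by auto
  moreover have "G u \<bullet> e = norm (G u)" unfolding e_def
    by (simp add: dot_square_norm power2_eq_square)
  ultimately have "0 \<ge> 2*pi * norm (G u) - hess_sphere_bound H * (2*pi)^2/2" by simp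
  then have "2*pi * norm (G u) \<le> 2*pi * (pi * hess_sphere_bound H)" by (simp add: power2_eq_square algebra_simps)
  then show ?thesis using pi_gt_zero by simp
qed

lemma G_norm_bound:
  assumes z: "z \<noteq> 0" shows "norm (G z) \<le> pi * hess_sphere_bound H / norm z"
proof -
  have n1: "norm ((1/norm z) *\<^sub>R z) = 1" using z by simp
  have "norm (G z) = norm (G ((1/norm z) *\<^sub>R z)) / norm z"
    using G_normalize[OF z] by (simp add: divide_inverse_commute)
  also have "\<dots> \<le> pi * hess_sphere_bound H / norm z"
    using G_unit_bound[OF n1] by (simp add: divide_right_mono)
  finally show ?thesis .
qed

lemma seg_close:
  assumes u: "norm u = 1" and v: "norm v = 1" and uv: "u \<bullet> v \<ge> 0"
  shows "L u - L v \<le> 2 * pi * hess_sphere_bound H"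
proof -
  define \<rho> where "\<rho> = hess_sphere_bound H"
  have \<rho>: "\<rho> > 0" unfolding \<rho>_def using rho_pos .
  define p where "p = (\<lambda>s. u + s *\<^sub>R (v - u))"
  have uu: "u \<bullet> u = 1" "v \<bullet> v = 1" using u v by (auto simp: dot_square_norm)
  have vu2: "(norm (v - u))^2 \<le> 2"
    using uu uv by (simp add: power2_norm_eq_inner inner_diff_left inner_diff_right inner_commute)
  have pn: "(norm (p s))^2 \<ge> 1/2" if "0 \<le> s" "s \<le> 1" for s
  proof -
    have eq: "p s = (1 - s) *\<^sub>R u + s *\<^sub>R v" unfolding p_def by (simp add: algebra_simps)
    have "(norm ((1 - s) *\<^sub>R u + s *\<^sub>R v))^2 = (1-s)^2 + s^2 + 2*(s*(1-s))*(u \<bullet> v)"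
      unfolding power2_norm_eq_inner using uu
      by (simp add: inner_add_left inner_add_right inner_commute power2_eq_square algebra_simps)
    moreover have "2*(s*(1-s))*(u \<bullet> v) \<ge> 0" using that uv by simp
    moreover have "(1-s)^2 + s^2 = 1/2 + 2*(s-1/2)^2" by (simp add: power2_eq_square algebra_simps)
    moreover have "(s-1/2)^2 \<ge> 0" by simp
    ultimately show ?thesis unfolding eq by linarith
  qed
  have p0: "p s \<noteq> 0" if "0 \<le> s" "s \<le> 1" for s using pn[OF that] by auto
  have bound: "G (p s) \<bullet> (v - u) \<ge> - (2 * pi * \<rho>)" if s: "0 \<le> s" "s \<le> 1" for s
  proof -
    have "\<bar>G (p s) \<bullet> (v - u)\<bar> \<le> norm (G (p s)) * norm (v - u)" by (rule Cauchy_Schwarz_ineq2)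
    also have "\<dots> \<le> (pi * \<rho> / norm (p s)) * norm (v - u)"
      using G_norm_bound[OF p0[OF s]] unfolding \<rho>_def by (intro mult_right_mono) auto
    also have "\<dots> \<le> 2 * pi * \<rho>"
    proof -
      have "(norm (v - u))^2 \<le> (2 * norm (p s))^2" using vu2 pn[OF s] by (simp add: power_mult_distrib)
      then have "norm (v - u) \<le> 2 * norm (p s)" by (rule power2_le_imp_le) simp
      then have "norm (v - u) / norm (p s) \<le> 2" using p0[OF s] by (simp add: field_simps)
      then have "(pi * \<rho>) * (norm (v - u) / norm (p s)) \<le> (pi * \<rho>) * 2"
        using \<rho> by (intro mult_left_mono) auto
      then show ?thesis by (simp add: field_simps)
    qed
    finally show ?thesis by linarith
  qed
  have "(\<lambda>s. L (p s) + 2 * pi * \<rho> * s) 0 \<le> (\<lambda>s. L (p s) + 2 * pi * \<rho> * s) 1"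
  proof (rule DERIV_nonneg_imp_nondecreasing[of 0 1 "\<lambda>s. L (p s) + 2 * pi * \<rho> * s"])
    fix x :: real assume x: "0 \<le> x" "x \<le> 1"
    have dp: "(p has_vector_derivative (v - u)) (at x)" unfolding p_def
      by (auto intro!: derivative_eq_intros)
    show "\<exists>y. ((\<lambda>s. L (p s) + 2 * pi * \<rho> * s) has_real_derivative y) (at x) \<and> 0 \<le> y"
      apply (rule exI[of _ "G (p x) \<bullet> (v - u) + 2 * pi * \<rho>"])
      using L_curve[OF dp p0[OF x]] bound[OF x]
      by (auto intro!: derivative_eq_intros)
  qed simp
  then show ?thesis unfolding p_def \<rho>_def by simp
qed

lemma exists_orth:
  fixes u :: 'a
  assumes u: "norm u = 1" shows "\<exists>w. norm w = 1 \<and> u \<bullet> w = 0"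
proof (rule ccontr)
  assume no: "\<not> ?thesis"
  have uu: "u \<bullet> u = 1" using u by (simp add: dot_square_norm)
  have par: "y = (y \<bullet> u) *\<^sub>R u" for y :: 'a
  proof (rule ccontr)
    assume ne: "y \<noteq> (y \<bullet> u) *\<^sub>R u"
    define w0 where "w0 = y - (y \<bullet> u) *\<^sub>R u"
    have w0: "w0 \<noteq> 0" using ne unfolding w0_def by simp
    have "u \<bullet> w0 = 0" unfolding w0_def using uu by (simp add: inner_diff_right inner_commute)
    then have "norm ((1/norm w0) *\<^sub>R w0) = 1 \<and> u \<bullet> ((1/norm w0) *\<^sub>R w0) = 0" using w0 by simp
    then show False using no by blast
  qed
  have G0: "G y = 0" if y: "y \<noteq> 0" for y
  proof -
    have yu: "y \<bullet> u \<noteq> 0"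
    proof
      assume "y \<bullet> u = 0"
      then have "y = 0" using par[of y] by simp
      then show False using y by simp
    qed
    have "0 = G y \<bullet> y" using G_orth[OF y] by simp
    also have "\<dots> = G y \<bullet> ((y \<bullet> u) *\<^sub>R u)" using par[of y] by metis
    also have "\<dots> = (G y \<bullet> u) * (y \<bullet> u)" by simp
    finally have "G y \<bullet> u = 0" using yu by simp
    then show ?thesis using par[of "G y"] by simp
  qed
  have H0: "norm (H y) = 0" if y: "y \<noteq> 0" for y
  proof -
    have "((\<lambda>z. 0::'a) has_derivative (\<lambda>h. 0)) (at y)" by simp
    then have "(G has_derivative (\<lambda>h. 0)) (at y)"
      by (rule has_derivative_transform_within_open[of _ _ _ _ "-{0}"]) (auto simp: y G0)
    then have "blinfun_apply (H y) = (\<lambda>h. 0)" using has_derivative_unique[OF G_hess[OF y]] by blast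
    then have "H y = 0" by (intro blinfun_eqI) simp
    then show ?thesis by simp
  qed
  have "(\<lambda>x. norm (H x)) ` {x::'a. norm x = 1} = {0}"
  proof (intro equalityI subsetI)
    fix r assume "r \<in> (\<lambda>x. norm (H x)) ` {x::'a. norm x = 1}"
    then obtain x where "norm x = 1" "r = norm (H x)" by blast
    then have "x \<noteq> 0" by auto
    then show "r \<in> {0}" using H0[of x] \<open>r = norm (H x)\<close> by auto
  next
    fix r assume "r \<in> {0::real}"
    have "u \<noteq> 0" using u by auto
    then have "r = norm (H u)" using H0[of u] \<open>r \<in> {0}\<close> by auto
    then show "r \<in> (\<lambda>x. norm (H x)) ` {x::'a. norm x = 1}" using u by blast
  qed
  then have "hess_sphere_bound H = 0" unfolding hess_sphere_bound_def by simp
  then show False using rho_pos by simp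
qed

lemma L_normalize: assumes "z \<noteq> 0" shows "L ((1/norm z) *\<^sub>R z) = L z"
  using scale_inv[of "1/norm z" z] assms by simp

lemma range_unit:
  assumes u: "norm u = 1" and v: "norm v = 1"
  shows "L u - L v \<le> 4 * pi * hess_sphere_bound H"
proof -
  have rp: "0 \<le> 2 * pi * hess_sphere_bound H" using rho_pos by simp
  have "\<exists>w. norm w = 1 \<and> u \<bullet> w \<ge> 0 \<and> w \<bullet> v \<ge> 0"
  proof (cases "u + v = 0")
    case True
    obtain w where w: "norm w = 1" "u \<bullet> w = 0" using exists_orth[OF u] by blast
    have "v = (u + v) - u" by simp
    then have "v = - u" using True by simp
    then show ?thesis using w by (intro exI[of _ w]) (auto simp: inner_commute)
  next
    case False
    define w where "w = (1/norm (u+v)) *\<^sub>R (u+v)"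
    have uv: "u \<bullet> v \<ge> -1" using Cauchy_Schwarz_ineq2[of u v] u v by simp
    have uu: "u \<bullet> u = 1" "v \<bullet> v = 1" using u v by (auto simp: dot_square_norm)
    have "u \<bullet> w = (1 + u \<bullet> v) / norm (u+v)" unfolding w_def using uu
      by (simp add: inner_add_right)
    moreover have "w \<bullet> v = (1 + u \<bullet> v) / norm (u+v)"
    proof -
      have "(u + v) \<bullet> v = 1 + u \<bullet> v" using uu by (simp add: inner_add_left)
      then show ?thesis unfolding w_def by simp
    qed
    moreover have "norm w = 1" unfolding w_def using False by simp
    ultimately show ?thesis using uv by (intro exI[of _ w]) auto
  qed
  then obtain w where w: "norm w = 1" "u \<bullet> w \<ge> 0" "w \<bullet> v \<ge> 0" by blast
  have "L u - L w \<le> 2 * pi * hess_sphere_bound H" by (rule seg_close[OF u w(1) w(2)])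
  moreover have "L w - L v \<le> 2 * pi * hess_sphere_bound H" by (rule seg_close[OF w(1) v w(3)])
  ultimately show ?thesis by linarith
qed

lemma range_gen:
  assumes "u \<noteq> 0" "v \<noteq> 0"
  shows "L u - L v \<le> 4 * pi * hess_sphere_bound H"
proof -
  have "norm ((1/norm u) *\<^sub>R u) = 1" "norm ((1/norm v) *\<^sub>R v) = 1" using assms by auto
  from range_unit[OF this] show ?thesis unfolding L_normalize[OF assms(1)] L_normalize[OF assms(2)] .
qed

lemma norm_step:
  assumes x: "x \<noteq> 0"
  shows "(norm (a *\<^sub>R x - b *\<^sub>R G x))^2 = a^2 * (norm x)^2 + b^2 * (norm (G x))^2"
proof -
  have o: "x \<bullet> G x = 0" using G_orth[OF x] by (simp add: inner_commute)
  show ?thesis unfolding power2_norm_eq_inner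
    using o by (simp add: inner_diff_left inner_diff_right inner_commute power2_eq_square)
qed

lemma descent:
  assumes x: "x \<noteq> 0" and e: "0 < e" "e \<le> 1/2" and eta: "eta > 0"
  shows "L ((1-e) *\<^sub>R x - eta *\<^sub>R G x) \<le> L x - eta * (norm (G x))^2/(1-e)
           + hess_sphere_bound H * eta^2 * (norm (G x))^2 / (2*(1-e)^2*(norm x)^2)"
proof -
  define \<rho> where "\<rho> = hess_sphere_bound H"
  have \<rho>: "\<rho> > 0" unfolding \<rho>_def using rho_pos .
  define y where "y = (1-e) *\<^sub>R x"
  define d where "d = - (eta *\<^sub>R G x)"
  define p where "p = (\<lambda>s::real. y + s *\<^sub>R d)"
  have e1: "1 - e > 0" using e by simp
  have yd: "y \<bullet> d = 0" unfolding y_def d_def using G_orth[OF x] by (simp add: inner_commute)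
  have ny: "(norm y)^2 = (1-e)^2 * (norm x)^2" unfolding y_def by (simp add: power_mult_distrib)
  have ny0: "(norm y)^2 > 0" using ny e1 x by simp
  have np: "(norm (p s))^2 \<ge> (norm y)^2" for s
  proof -
    have "(norm (p s))^2 = (norm y)^2 + s^2 * (norm d)^2" unfolding p_def power2_norm_eq_inner
      using yd by (simp add: inner_add_left inner_add_right inner_commute power2_eq_square)
    then show ?thesis by simp
  qed
  have p0: "p s \<noteq> 0" for s using np[of s] ny0 by auto
  define K where "K = \<rho> * (norm d)^2 / (norm y)^2"
  have dp: "(p has_vector_derivative d) (at s)" for s unfolding p_def by (auto intro!: derivative_eq_intros)
  have dd: "((\<lambda>s::real. d) has_vector_derivative 0) (at s)" for s by (auto intro!: derivative_eq_intros)
  have "(\<lambda>s. - L (p s)) 1 \<ge> (\<lambda>s. - L (p s)) 0 + 1 * (- (G (p 0) \<bullet> d)) - K * 1^2 / 2"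
  proof (rule taylor_lb[where psi = "\<lambda>s. - (G (p s) \<bullet> d)" and chi = "\<lambda>s. - (G (p s) \<bullet> 0 + (H (p s) d) \<bullet> d)"])
    show "(0::real) \<le> 1" by simp
    fix s :: real
    show "((\<lambda>s. - L (p s)) has_real_derivative - (G (p s) \<bullet> d)) (at s)"
      using L_curve[OF dp p0] by (rule DERIV_minus)
    show "((\<lambda>s. - (G (p s) \<bullet> d)) has_real_derivative - (G (p s) \<bullet> 0 + (H (p s) d) \<bullet> d)) (at s)"
      using G_curve[OF dp dd p0, of s] by (rule DERIV_minus)
    have "\<bar>(H (p s) d) \<bullet> d\<bar> \<le> \<rho> / (norm (p s))^2 * (norm d)^2"
      using hess_quad[OF p0] unfolding \<rho>_def .
    also have "\<dots> \<le> \<rho> / (norm y)^2 * (norm d)^2"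
      using np[of s] ny0 \<rho> p0[of s] by (intro mult_right_mono divide_left_mono) (auto intro!: mult_pos_pos)
    finally show "- K \<le> - (G (p s) \<bullet> 0 + (H (p s) d) \<bullet> d)" unfolding K_def by simp
  qed
  then have main: "L (p 1) \<le> L y + G y \<bullet> d + K / 2" unfolding p_def by simp
  have "p 1 = (1-e) *\<^sub>R x - eta *\<^sub>R G x" unfolding p_def y_def d_def by simp
  moreover have "L y = L x" unfolding y_def using scale_inv[OF e1 x] .
  moreover have "G y \<bullet> d = - eta * (norm (G x))^2 / (1-e)"
    unfolding y_def d_def using G_scale[OF e1 x] by (simp add: power2_norm_eq_inner)
  moreover have "K / 2 = \<rho> * eta^2 * (norm (G x))^2 / (2*(1-e)^2*(norm x)^2)"
    unfolding K_def ny d_def by (simp add: power_mult_distrib)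
  ultimately show ?thesis using main unfolding \<rho>_def by simp
qed

end


lemma desc_arith:
  fixes L0 L1 eta e rho n g :: real
  assumes e: "0 < e" "e \<le> 1/2" and eta: "eta > 0" and rho: "rho > 0" and n: "n > 0" and g: "g \<ge> 0"
    and d: "L1 \<le> L0 - eta*g/(1-e) + rho*eta^2*g/(2*(1-e)^2*n)"
    and a4: "4 \<le> n/(rho*eta)"
  shows "L1/rho \<le> L0/rho - 3/4*(eta*g/rho)"
proof -
  define u where "u = 1/(1-e)"
  define r where "r = rho*eta/n"
  define A where "A = eta*g"
  have A: "A \<ge> 0" unfolding A_def using eta g by simp
  have u: "1 \<le> u" "u \<le> 2" unfolding u_def using e by (auto simp: field_simps)
  have r: "0 \<le> r" "r \<le> 1/4" unfolding r_def using a4 rho eta n by (auto simp: field_simps)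
  have t1: "eta*g/(1-e) = A * u" unfolding A_def u_def by simp
  have t2: "rho*eta^2*g/(2*(1-e)^2*n) = A * (u^2 * r / 2)" unfolding A_def u_def r_def
    using e n by (simp add: field_simps power2_eq_square)
  have "(u - 1) * (2 - u) \<ge> 0" using u by simp
  then have "u^2 \<le> 3*u - 2" by (simp add: power2_eq_square algebra_simps)
  moreover have "u^2 * r \<le> u^2 * (1/4)" using r by (intro mult_left_mono) auto
  ultimately have "u - u^2 * r / 2 \<ge> 3/4" using u by linarith
  then have "A * (u - u^2 * r / 2) \<ge> A * (3/4)" using A by (intro mult_left_mono) auto
  moreover have "A * (u - u^2 * r / 2) = A * u - A * (u^2 * r / 2)" by (simp add: right_diff_distrib)
  moreover have "L1 \<le> L0 - A * u + A * (u^2 * r / 2)" using d unfolding t1 t2 .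
  ultimately have "L1 \<le> L0 - 3/4 * A" by linarith
  then have "L1/rho \<le> (L0 - 3/4 * A)/rho" using rho by (simp add: divide_right_mono)
  then show ?thesis unfolding A_def by (simp add: diff_divide_distrib)
qed

theorem mainTheorem1:
  fixes L :: "'a::euclidean_space \<Rightarrow> real"
    and G :: "'a \<Rightarrow> 'a"
    and H :: "'a \<Rightarrow> 'a \<Rightarrow>\<^sub>L 'a"
    and x :: "nat \<Rightarrow> 'a"
    and eta lam :: real
  assumes L_grad: "\<And>y. y \<noteq> 0 \<Longrightarrow> (L has_derivative (\<lambda>h. G y \<bullet> h)) (at y)"
    and G_hess: "\<And>y. y \<noteq> 0 \<Longrightarrow> (G has_derivative blinfun_apply (H y)) (at y)"
    and H_cont: "continuous_on (- {0}) H"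
    and scale_inv: "\<And>c y. c > 0 \<Longrightarrow> y \<noteq> 0 \<Longrightarrow> L (c *\<^sub>R y) = L y"
    and rho_pos: "hess_sphere_bound H > 0"
    and eta_pos: "eta > 0" and lambda_pos: "lam > 0"
    and eta_lambda: "eta * lam \<le> 1 / 2"
    and x0: "x 0 \<noteq> 0"
    and x_step: "\<And>t. x (Suc t) = (1 - eta * lam) *\<^sub>R x t - eta *\<^sub>R G (x t)"
  shows "Min ((\<lambda>t. (norm (G ((1 / norm (x t)) *\<^sub>R x t)))\<^sup>2) `
            {0 .. nat \<lceil>(1 / (2 * eta * lam)) *
               (\<bar>ln ((norm (x 0))\<^sup>2 / (hess_sphere_bound H * pi\<^sup>2 * eta))\<bar> + 3)\<rceil>})
         \<le> 8 * pi ^ 4 * (hess_sphere_bound H)\<^sup>2 * lam * eta"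
proof -
  interpret sinv L G H using L_grad G_hess H_cont scale_inv rho_pos by unfold_locales
  define \<rho> where "\<rho> = hess_sphere_bound H"
  have \<rho>: "\<rho> > 0" unfolding \<rho>_def using rho_pos .
  define e where "e = eta * lam"
  have e: "0 < e" "e \<le> 1/2" unfolding e_def using eta_pos lambda_pos eta_lambda by auto
  have e1: "1 - e > 0" using e by simp
  have step: "x (Suc t) = (1 - e) *\<^sub>R x t - eta *\<^sub>R G (x t)" for t unfolding e_def by (rule x_step)
  have xnz: "x t \<noteq> 0" for t
  proof (induction t)
    case 0 show ?case by (rule x0)
  next
    case (Suc t)
    have "(norm (x (Suc t)))^2 = (1-e)^2 * (norm (x t))^2 + eta^2 * (norm (G (x t)))^2"
      unfolding step by (rule norm_step[OF Suc])
    moreover have "(1-e)^2 * (norm (x t))^2 > 0" using Suc e1 by simp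
    moreover have "eta^2 * (norm (G (x t)))^2 \<ge> 0" by simp
    ultimately have "(norm (x (Suc t)))^2 > 0" by linarith
    then show ?case by auto
  qed
  define xb where "xb t = (1 / norm (x t)) *\<^sub>R x t" for t
  define a where "a t = (norm (x t))^2 / (\<rho> * eta)" for t
  define s where "s t = (norm (G (xb t)))^2 / \<rho>^2" for t
  define La where "La t = L (x t) / \<rho>" for t
  define g where "g t = (norm (G (x t)))^2" for t
  have xbn: "norm (xb t) = 1" for t unfolding xb_def using xnz[of t] by simp
  have gt: "g t = (norm (G (xb t)))^2 / (norm (x t))^2" for t
    unfolding g_def xb_def using G_normalize[OF xnz[of t]] by (simp add: power_divide)
  have a_pos: "a t > 0" for t unfolding a_def using xnz[of t] \<rho> eta_pos by simp
  have sa: "s t / a t = eta * g t / \<rho>" for t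
    unfolding s_def a_def gt using xnz[of t] \<rho> eta_pos by (simp add: field_simps power2_eq_square)
  have a_step: "a (Suc t) = (1-e)^2 * a t + s t / a t" for t
  proof -
    have "(norm (x (Suc t)))^2 = (1-e)^2 * (norm (x t))^2 + eta^2 * g t"
      unfolding step g_def by (rule norm_step[OF xnz[of t]])
    then have "a (Suc t) = (1-e)^2 * a t + eta * g t / \<rho>"
      unfolding a_def using \<rho> eta_pos by (simp add: field_simps power2_eq_square)
    then show ?thesis using sa by simp
  qed
  have s_bd: "s t \<le> pi^2" for t
  proof -
    have "norm (G (xb t)) \<le> pi * \<rho>" unfolding \<rho>_def by (rule G_unit_bound[OF xbn])
    then have "(norm (G (xb t)))^2 \<le> (pi * \<rho>)^2" by (intro power_mono) auto
    then show ?thesis unfolding s_def using \<rho> by (simp add: field_simps power_mult_distrib)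
  qed
  have desc: "La (Suc t) \<le> La t - 3/4 * (s t / a t)" if a4: "4 \<le> a t" for t
  proof -
    have "L (x (Suc t)) \<le> L (x t) - eta * g t/(1-e) + \<rho> * eta^2 * g t / (2*(1-e)^2*(norm (x t))^2)"
      unfolding step g_def \<rho>_def by (rule descent[OF xnz[of t] e eta_pos])
    moreover have "4 \<le> (norm (x t))^2 / (\<rho> * eta)" using a4 unfolding a_def .
    moreover have "(norm (x t))^2 > 0" using xnz[of t] by simp
    moreover have "g t \<ge> 0" unfolding g_def by simp
    ultimately have "L (x (Suc t)) / \<rho> \<le> L (x t) / \<rho> - 3/4 * (eta * g t / \<rho>)"
      using desc_arith[OF e eta_pos \<rho>] by blast
    then show ?thesis unfolding La_def sa[of t] .
  qed
  have range: "La i - La j \<le> 4*pi" for i j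
  proof -
    have "L (x i) - L (x j) \<le> 4 * pi * \<rho>" unfolding \<rho>_def by (rule range_gen[OF xnz xnz])
    then have "(L (x i) - L (x j)) / \<rho> \<le> 4 * pi" using \<rho> by (simp add: field_simps)
    then show ?thesis unfolding La_def by (simp add: diff_divide_distrib)
  qed
  define T0 where "T0 = nat \<lceil>(1 / (2 * eta * lam)) *
               (\<bar>ln ((norm (x 0))\<^sup>2 / (hess_sphere_bound H * pi\<^sup>2 * eta))\<bar> + 3)\<rceil>"
  have T0: "real T0 \<ge> (\<bar>ln (a 0 / pi^2)\<bar> + 3)/(2*e)"
  proof -
    have "a 0 / pi^2 = (norm (x 0))\<^sup>2 / (hess_sphere_bound H * pi\<^sup>2 * eta)"
      unfolding a_def \<rho>_def by (simp add: field_simps)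
    moreover have "(1 / (2 * eta * lam)) * (\<bar>ln ((norm (x 0))\<^sup>2 / (hess_sphere_bound H * pi\<^sup>2 * eta))\<bar> + 3)
        = (\<bar>ln ((norm (x 0))\<^sup>2 / (hess_sphere_bound H * pi\<^sup>2 * eta))\<bar> + 3) / (2*e)"
      unfolding e_def by (simp add: field_simps)
    moreover have "(\<bar>ln ((norm (x 0))\<^sup>2 / (hess_sphere_bound H * pi\<^sup>2 * eta))\<bar> + 3) / (2*e) \<ge> 0"
      using e by simp
    ultimately show ?thesis unfolding T0_def using nat_ceil_bounds(1) by metis
  qed
  show ?thesis
  proof (rule ccontr)
    assume "\<not> ?thesis"
    then have gt: "Min ((\<lambda>t. (norm (G ((1 / norm (x t)) *\<^sub>R x t)))\<^sup>2) ` {0 .. T0})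
         > 8 * pi ^ 4 * (hess_sphere_bound H)\<^sup>2 * lam * eta" unfolding T0_def by (simp only: not_le)
    have s_low: "s t > 8*pi^4*e" if "t \<le> T0" for t
    proof -
      have "(norm (G (xb t)))^2 > 8 * pi ^ 4 * \<rho>^2 * lam * eta"
      proof -
        have "finite ((\<lambda>t. (norm (G ((1 / norm (x t)) *\<^sub>R x t)))\<^sup>2) ` {0 .. T0})" by simp
        moreover have "(\<lambda>t. (norm (G ((1 / norm (x t)) *\<^sub>R x t)))\<^sup>2) ` {0 .. T0} \<noteq> {}" by simp
        ultimately have "\<forall>y\<in>(\<lambda>t. (norm (G ((1 / norm (x t)) *\<^sub>R x t)))\<^sup>2) ` {0 .. T0}.
            8 * pi ^ 4 * (hess_sphere_bound H)\<^sup>2 * lam * eta < y"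
          using gt Min_gr_iff by blast
        then show ?thesis using that unfolding xb_def \<rho>_def by auto
      qed
      then have "(norm (G (xb t)))^2 / \<rho>^2 > (8 * pi ^ 4 * \<rho>^2 * lam * eta) / \<rho>^2"
        using \<rho> by (intro divide_strict_right_mono) auto
      then show ?thesis unfolding s_def e_def using \<rho> by (simp add: field_simps)
    qed
    show False by (rule discrete_contra[OF e a_pos a_step s_bd desc range s_low T0])
  qed
qed


end
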